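(* For every integer $n\ge 0$ and every nonzero complex number $x$, \[ \sum_{j=0}^{n}L_{2(n-2j)}(x)=\sum_{j=0}^{n}\left(\frac{x^2+2}{2}\right)^jL_{2(n-j)}(x)=\frac{2}{x}F_{2(n+1)}(x). \]
   Context: The Fibonacci polynomials $F_n(x)$ and Lucas polynomials $L_n(x)$ are defined by $F_0(x)=0$, $F_1(x)=1$, $L_0(x)=2$, $L_1(x)=x$ and $G_{n+1}(x)=xG_n(x)+G_{n-1}(x)$; they are extended to negative indices by $F_{-n}(x)=(-1)^{n-1}F_n(x)$ and $L_{-n}(x)=(-1)^nL_n(x)$. *)

theory Defs
  imports Complex_Main
begin

fun fibp :: "nat \<Rightarrow> complex \<Rightarrow> complex" where
  "fibp 0 x = 0"
| "fibp (Suc 0) x = 1"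
| "fibp (Suc (Suc n)) x = x * fibp (Suc n) x + fibp n x"

fun lucp :: "nat \<Rightarrow> complex \<Rightarrow> complex" where
  "lucp 0 x = 2"
| "lucp (Suc 0) x = x"
| "lucp (Suc (Suc n)) x = x * lucp (Suc n) x + lucp n x"

definition Fib_poly :: "int \<Rightarrow> complex \<Rightarrow> complex" where
  "Fib_poly k x = (if k \<ge> 0 then fibp (nat k) x
                   else (-1) ^ (nat (-k) - 1) * fibp (nat (-k)) x)"

definition Luc_poly :: "int \<Rightarrow> complex \<Rightarrow> complex" where
  "Luc_poly k x = (if k \<ge> 0 then lucp (nat k) x
                   else (-1) ^ nat (-k) * lucp (nat (-k)) x)"

end

theory Submission
  imports Defs
begin

lemma induct2: "P 0 \<Longrightarrow> P (Suc 0) \<Longrightarrow> (\<And>n. P n \<Longrightarrow> P (Suc n) \<Longrightarrow> P (Suc (Suc n))) \<Longrightarrow> P n"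
proof -
  assume a: "P 0" "P (Suc 0)" "\<And>n. P n \<Longrightarrow> P (Suc n) \<Longrightarrow> P (Suc (Suc n))"
  have "P n \<and> P (Suc n)" by (induction n) (auto simp: a)
  then show "P n" by simp
qed

lemma fl2: "2 * fibp (Suc (Suc n)) x = fibp n x * (x^2 + 2) + x * lucp n x"
proof (induction n rule: induct2)
  case (3 n)
  have "2 * fibp (Suc (Suc (Suc (Suc n)))) x = x * (2 * fibp (Suc (Suc (Suc n))) x) + 2 * fibp (Suc (Suc n)) x"
    by (simp add: algebra_simps)
  also have "\<dots> = x * (fibp (Suc n) x * (x^2 + 2) + x * lucp (Suc n) x) + (fibp n x * (x^2 + 2) + x * lucp n x)"
    using 3 by simp
  also have "\<dots> = fibp (Suc (Suc n)) x * (x^2 + 2) + x * lucp (Suc (Suc n)) x"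
    by (simp add: algebra_simps)
  finally show ?case .
qed (auto simp: algebra_simps power2_eq_square)

lemma fl3: "fibp (n + 4) x = fibp n x + x * lucp (n + 2) x"
proof (induction n rule: induct2)
  case 1 show ?case by (simp add: numeral_eq_Suc algebra_simps)
next
  case 2 show ?case by (simp add: numeral_eq_Suc algebra_simps)
next
  case (3 n)
  have e1: "Suc (Suc n) + 4 = Suc (Suc (n+4))" "Suc n + 4 = Suc (n+4)" by simp_all
  have e2: "Suc (Suc n) + 2 = Suc (Suc (n+2))" "Suc n + 2 = Suc (n+2)" by simp_all
  have "fibp (Suc (Suc (n+4))) x = x * fibp (Suc (n+4)) x + fibp (n+4) x" by (simp only: fibp.simps)
  also have "\<dots> = x * (fibp (Suc n) x + x * lucp (Suc (n + 2)) x) + (fibp n x + x * lucp (n + 2) x)"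
    using 3 unfolding e1 e2 by simp
  also have "\<dots> = fibp (Suc (Suc n)) x + x * lucp (Suc (Suc (n+2))) x"
    by (simp add: algebra_simps)
  finally show ?case unfolding e1 e2 .
qed

lemma Lpos: "Luc_poly (int m) x = lucp m x"
  by (simp add: Luc_poly_def)

lemma Labs: "Luc_poly (2 * k) x = lucp (nat (2 * \<bar>k\<bar>)) x"
proof (cases "k \<ge> 0")
  case True then show ?thesis by (simp add: Luc_poly_def)
next
  case False
  have "nat (- (2*k)) = 2 * nat (-k)" using False by simp
  then show ?thesis using False by (simp add: Luc_poly_def)
qed

definition A :: "nat \<Rightarrow> complex \<Rightarrow> complex" where
  "A n x = 2 / x * fibp (2*n+2) x"

lemma bsum:
  assumes "x \<noteq> 0"
  shows "(\<Sum>j=0..n. ((x^2 + 2) / 2) ^ j * Luc_poly (2 * (int n - int j)) x) = A n x"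
proof (induction n)
  case 0
  then show ?case using assms by (simp add: A_def numeral_eq_Suc Luc_poly_def)
next
  case (Suc n)
  let ?c = "(x^2 + 2) / 2"
  have "(\<Sum>j=0..Suc n. ?c ^ j * Luc_poly (2 * (int (Suc n) - int j)) x)
      = Luc_poly (2 * int (Suc n)) x + (\<Sum>j=Suc 0..Suc n. ?c ^ j * Luc_poly (2 * (int (Suc n) - int j)) x)"
    by (simp add: sum.atLeast_Suc_atMost)
  also have "(\<Sum>j=Suc 0..Suc n. ?c ^ j * Luc_poly (2 * (int (Suc n) - int j)) x)
      = (\<Sum>j=0..n. ?c ^ Suc j * Luc_poly (2 * (int (Suc n) - int (Suc j))) x)"
    by (rule sum.shift_bounds_cl_Suc_ivl)
  also have "\<dots> = ?c * (\<Sum>j=0..n. ?c ^ j * Luc_poly (2 * (int n - int j)) x)"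
    by (simp add: sum_distrib_left mult.assoc)
  also have "\<dots> = ?c * A n x" using Suc by simp
  finally have 1: "(\<Sum>j=0..Suc n. ?c ^ j * Luc_poly (2 * (int (Suc n) - int j)) x)
      = lucp (2*n+2) x + ?c * A n x"
    using Lpos[of "2*n+2" x] by (simp add: mult.commute)
  have 2: "2 * fibp (2*n+4) x = fibp (2*n+2) x * (x^2 + 2) + x * lucp (2*n+2) x"
    using fl2[of "2*n+2" x] by (simp add: numeral_eq_Suc)
  have key: "\<And>F G L. 2*G = F*(x^2+2)+x*L \<Longrightarrow> 2/x*G = L + (x^2+2)/2*(2/x*F)"
    using assms by (simp add: field_simps)
  have e: "2 * Suc n + 2 = 2*n+4" by simp
  have "A (Suc n) x = lucp (2*n+2) x + ?c * A n x"
    unfolding A_def e by (rule key[OF 2])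
  then show ?case using 1 by simp
qed


lemma asum_rec:
  "(\<Sum>j=0..Suc (Suc n). Luc_poly (2 * (int (Suc (Suc n)) - 2 * int j)) x)
   = (\<Sum>j=0..n. Luc_poly (2 * (int n - 2 * int j)) x) + 2 * lucp (2*n+4) x"
proof -
  let ?f = "\<lambda>m j. Luc_poly (2 * (int m - 2 * int j)) x"
  have "(\<Sum>j=0..Suc (Suc n). ?f (Suc (Suc n)) j) = ?f (Suc (Suc n)) 0 + (\<Sum>j=Suc 0..Suc (Suc n). ?f (Suc (Suc n)) j)"
    by (simp add: sum.atLeast_Suc_atMost)
  also have "(\<Sum>j=Suc 0..Suc (Suc n). ?f (Suc (Suc n)) j) = (\<Sum>j=0..Suc n. ?f (Suc (Suc n)) (Suc j))"
    by (rule sum.shift_bounds_cl_Suc_ivl)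
  also have "\<dots> = (\<Sum>j=0..n. ?f (Suc (Suc n)) (Suc j)) + ?f (Suc (Suc n)) (Suc (Suc n))"
    by (rule sum.atLeast0_atMost_Suc)
  also have "(\<Sum>j=0..n. ?f (Suc (Suc n)) (Suc j)) = (\<Sum>j=0..n. ?f n j)"
    by (rule sum.cong) (simp_all add: algebra_simps)
  also have "?f (Suc (Suc n)) 0 = lucp (2*n+4) x"
    using Lpos[of "2*n+4" x] by (simp add: algebra_simps)
  also have "?f (Suc (Suc n)) (Suc (Suc n)) = lucp (2*n+4) x"
  proof -
    have "2 * (int (Suc (Suc n)) - 2 * int (Suc (Suc n))) = 2 * (- int (n+2))" by simp
    then show ?thesis using Labs[of "- int (n+2)" x] by (simp add: nat_add_distrib nat_mult_distrib)
  qed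
  finally show ?thesis by (simp add: algebra_simps)
qed

lemma asum:
  assumes "x \<noteq> 0"
  shows "(\<Sum>j=0..n. Luc_poly (2 * (int n - 2 * int j)) x) = A n x"
proof (induction n rule: induct2)
  case 1 then show ?case using assms by (simp add: A_def numeral_eq_Suc Luc_poly_def)
next
  case 2 then show ?case using assms
    by (simp add: A_def numeral_eq_Suc Luc_poly_def field_simps)
next
  case (3 n)
  have "A (Suc (Suc n)) x = A n x + 2 * lucp (2*n+4) x"
    using fl3[of "2*n+2" x] assms unfolding A_def
    by (simp add: field_simps algebra_simps numeral_eq_Suc del: fibp.simps lucp.simps)
  then show ?case using 3 asum_rec by simp
qed

theorem theorem10:
  fixes n :: nat and x :: complex
  assumes "x \<noteq> 0"
  shows "(\<Sum>j=0..n. Luc_poly (2 * (int n - 2 * int j)) x)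
           = (\<Sum>j=0..n. ((x^2 + 2) / 2) ^ j * Luc_poly (2 * (int n - int j)) x)
       \<and> (\<Sum>j=0..n. ((x^2 + 2) / 2) ^ j * Luc_poly (2 * (int n - int j)) x)
           = 2 / x * Fib_poly (2 * (int n + 1)) x"
proof -
  have "Fib_poly (2 * (int n + 1)) x = fibp (2*n+2) x"
    by (simp add: Fib_poly_def nat_add_distrib nat_mult_distrib)
  then show ?thesis using asum[OF assms] bsum[OF assms] by (simp add: A_def)
qed

end
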